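(* Let $k_0\in\mathbb{R}\setminus\{0\}$ and let $z\in C^2([-1,1])$ be a complex-valued function with $z(x)\neq 0$ for all $x\in[-1,1]$ and satisfying the boundary conditions $$z'(1)-ik_0 z(1)=0,\qquad z'(-1)+ik_0 z(-1)=0 .$$ Define the complex potential $U:\mathbb{R}\to\mathbb{C}$ by $$U(x)=\frac{z''(x)+k_0^2 z(x)}{z(x)}\quad (|x|<1),\qquad U(x)=0\quad (|x|\ge 1).$$ Then the function $$\psi(x)=\begin{cases} z(x), & |x|\le 1,\\ z(\pm 1)\,e^{ik_0(|x|-1)}, & \pm x\ge 1,\end{cases}$$ is a nontrivial $C^1(\mathbb{R})$ solution of $-\psi''+U(x)\psi=k_0^2\psi$ on $|x|<1$ with $\psi(x)=\alpha_\pm e^{ik_0|x|}$ for $\pm x\ge 1$ (for constants $\alpha_\pm\in\mathbb{C}$). Consequently $M_{22}(k_0)=0$, i.e. $U$ has a spectral singularity at $k=k_0$.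
   Context: For a potential $U$ vanishing outside $[-1,1]$ and $k\in\mathbb{R}\setminus\{0\}$, consider solutions $\psi$ of $-\psi''+U(x)\psi=k^2\psi$ on $|x|<1$ (continuous with continuous derivative on $\mathbb{R}$) of the form $\psi=a_\pm e^{ikx}+b_\pm e^{-ikx}$ for $\pm x\ge 1$. The transfer matrix $M(k)=(M_{ij}(k))_{i,j=1,2}$ is the $2\times 2$ matrix defined by $(a_+,b_+)^T=M(k)(a_-,b_-)^T$. A real $k_0\neq 0$ with $M_{22}(k_0)=0$ is called a spectral singularity (it corresponds to lasing if $k_0>0$ and to coherent perfect absorption if $k_0<0$); equivalently, the problem $-\psi''+U\psi=k_0^2\psi$ on $|x|<1$, $\psi=\alpha_\pm e^{ik_0|x|}$ for $\pm x\ge 1$, has a nontrivial solution. *)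

theory Defs
  imports "HOL-Analysis.Analysis"
begin

definition schroedinger_solution ::
  "(real \<Rightarrow> complex) \<Rightarrow> real \<Rightarrow> (real \<Rightarrow> complex) \<Rightarrow> bool" where
  "schroedinger_solution U k \<psi> \<longleftrightarrow>
     (\<exists>\<psi>'. (\<forall>x. (\<psi> has_vector_derivative \<psi>' x) (at x)) \<and> continuous_on UNIV \<psi>' \<and>
       (\<forall>x. \<bar>x\<bar> < 1 \<longrightarrow>
          (\<exists>\<psi>''. (\<psi>' has_vector_derivative \<psi>'') (at x) \<and>
                 - \<psi>'' + U x * \<psi> x = complex_of_real (k^2) * \<psi> x)))"

definition is_transfer_matrix ::
  "(real \<Rightarrow> complex) \<Rightarrow> real \<Rightarrow> complex^2^2 \<Rightarrow> bool" where
  "is_transfer_matrix U k M \<longleftrightarrow>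
     (\<forall>\<psi> am bm ap bp. schroedinger_solution U k \<psi> \<and>
        (\<forall>x. x \<le> -1 \<longrightarrow> \<psi> x = am * exp (\<i> * of_real (k * x)) + bm * exp (- \<i> * of_real (k * x))) \<and>
        (\<forall>x. x \<ge> 1 \<longrightarrow> \<psi> x = ap * exp (\<i> * of_real (k * x)) + bp * exp (- \<i> * of_real (k * x)))
      \<longrightarrow> ap = M$1$1 * am + M$1$2 * bm \<and> bp = M$2$1 * am + M$2$2 * bm)"

end

theory Submission
  imports Defs
begin

lemma expd: "((\<lambda>x::real. c * exp (\<i> * of_real (a * x + b))) has_vector_derivative
   (\<i> * of_real a * c * exp (\<i> * of_real (a * x + b)))) (at x within S)"
proof -
  have a: "((\<lambda>x::real. of_real (a * x + b) :: complex) has_vector_derivative of_real a) (at x within S)"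
    by (rule has_vector_derivative_of_real) (auto intro!: derivative_eq_intros)
  have b: "((\<lambda>x::real. \<i> * of_real (a * x + b) :: complex) has_vector_derivative \<i> * of_real a) (at x within S)"
    using has_vector_derivative_mult_right[OF a, of \<i>] by simp
  have c: "((exp \<circ> (\<lambda>x::real. \<i> * of_real (a * x + b) :: complex)) has_vector_derivative (\<i> * of_real a) * exp (\<i> * of_real (a * x + b))) (at x within S)"
    by (rule field_vector_diff_chain_within[OF b]) (rule DERIV_exp [THEN has_field_derivative_at_within])
  show ?thesis using has_vector_derivative_mult_right[OF c, of c] by (simp add: o_def mult_ac)
qed

lemma hvd_Un: "(f has_vector_derivative D) (at x within S) \<Longrightarrow> (f has_vector_derivative D) (at x within T) \<Longrightarrow> (f has_vector_derivative D) (at x within S \<union> T)"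
  unfolding has_vector_derivative_def has_derivative_at_within by (subst at_within_union) (simp add: filterlim_sup)

lemma exp_split: "exp (\<i> * of_real (u::real)) = exp (\<i> * of_real v) * exp (\<i> * of_real w)" if "u = v + w"
  using that by (simp add: exp_add[symmetric] algebra_simps)

theorem mainTheorem1:
  fixes k0 :: real and z z' z'' :: "real \<Rightarrow> complex"
    and U \<psi> :: "real \<Rightarrow> complex"
  assumes k0: "k0 \<noteq> 0"
    and z1: "\<forall>x\<in>{-1..1}. (z has_vector_derivative z' x) (at x within {-1..1})"
    and z2: "\<forall>x\<in>{-1..1}. (z' has_vector_derivative z'' x) (at x within {-1..1})"
    and z2c: "continuous_on {-1..1} z''"
    and znz: "\<forall>x\<in>{-1..1}. z x \<noteq> 0"
    and bc1: "z' 1 - \<i> * of_real k0 * z 1 = 0"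
    and bc2: "z' (-1) + \<i> * of_real k0 * z (-1) = 0"
    and U_def: "U = (\<lambda>x. if \<bar>x\<bar> < 1 then (z'' x + of_real (k0^2) * z x) / z x else 0)"
    and \<psi>_def: "\<psi> = (\<lambda>x. if \<bar>x\<bar> \<le> 1 then z x
                   else if x \<ge> 1 then z 1 * exp (\<i> * of_real (k0 * (\<bar>x\<bar> - 1)))
                   else z (-1) * exp (\<i> * of_real (k0 * (\<bar>x\<bar> - 1))))"
  shows "schroedinger_solution U k0 \<psi> \<and> (\<exists>x. \<psi> x \<noteq> 0) \<and>
         (\<exists>\<alpha>p \<alpha>m. (\<forall>x. x \<ge> 1 \<longrightarrow> \<psi> x = \<alpha>p * exp (\<i> * of_real (k0 * \<bar>x\<bar>))) \<and>
                  (\<forall>x. x \<le> -1 \<longrightarrow> \<psi> x = \<alpha>m * exp (\<i> * of_real (k0 * \<bar>x\<bar>)))) \<and>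
         (\<forall>M. is_transfer_matrix U k0 M \<longrightarrow> M$2$2 = 0)"
proof -
  define e1 where "e1 = (\<lambda>x::real. z 1 * exp (\<i> * of_real (k0 * x + - k0)))"
  define e2 where "e2 = (\<lambda>x::real. z (-1) * exp (\<i> * of_real ((- k0) * x + - k0)))"
  define d1 where "d1 = (\<lambda>x::real. \<i> * of_real k0 * z 1 * exp (\<i> * of_real (k0 * x + - k0)))"
  define d2 where "d2 = (\<lambda>x::real. \<i> * of_real (- k0) * z (-1) * exp (\<i> * of_real ((- k0) * x + - k0)))"
  define p' where "p' = (\<lambda>x::real. if \<bar>x\<bar> \<le> 1 then z' x else if x \<ge> 1 then d1 x else d2 x)"
  have de1: "(e1 has_vector_derivative d1 x) (at x within S)" for x S
    unfolding e1_def d1_def by (rule expd)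
  have de2: "(e2 has_vector_derivative d2 x) (at x within S)" for x S
    unfolding e2_def d2_def by (rule expd)
  have pz: "\<psi> x = z x" if "x \<in> {-1..1}" for x using that by (simp add: \<psi>_def abs_le_iff)
  have pe1: "\<psi> x = e1 x" if "x \<ge> 1" for x
  proof (cases "x = 1")
    case True then show ?thesis by (simp add: \<psi>_def e1_def)
  next
    case False
    have "k0 * (\<bar>x\<bar> - 1) = k0 * x + - k0" using that by (simp add: algebra_simps)
    then show ?thesis using that False by (simp add: \<psi>_def e1_def)
  qed
  have pe2: "\<psi> x = e2 x" if "x \<le> -1" for x
  proof (cases "x = -1")
    case True then show ?thesis by (simp add: \<psi>_def e2_def)
  next
    case False
    have "k0 * (\<bar>x\<bar> - 1) = - k0 * x + - k0" using that by (simp add: algebra_simps)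
    then show ?thesis using that False by (simp add: \<psi>_def e2_def)
  qed
  have qz: "p' x = z' x" if "x \<in> {-1..1}" for x using that by (simp add: p'_def abs_le_iff)
  have qd1: "p' x = d1 x" if "x \<ge> 1" for x
  proof (cases "x = 1")
    case True then show ?thesis using bc1 by (simp add: p'_def d1_def)
  next
    case False then show ?thesis using that by (simp add: p'_def)
  qed
  have qd2: "p' x = d2 x" if "x \<le> -1" for x
  proof (cases "x = -1")
    case True
    have "z' (-1) = - (\<i> * of_real k0 * z (-1))" using bc2 by (simp add: eq_neg_iff_add_eq_0)
    then show ?thesis using True by (simp add: p'_def d2_def)
  next
    case False then show ?thesis using that by (simp add: p'_def)
  qed
  have zat: "(z has_vector_derivative z' x) (at x)" if "\<bar>x\<bar> < 1" for x
  proof -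
    have "(z has_vector_derivative z' x) (at x within {-1<..<1})"
      by (rule has_vector_derivative_within_subset[of _ _ _ "{-1..1}"]) (use z1 that in \<open>auto simp: abs_less_iff\<close>)
    then show ?thesis using that by (subst (asm) has_vector_derivative_within_open) auto
  qed
  have z'at: "(z' has_vector_derivative z'' x) (at x)" if "\<bar>x\<bar> < 1" for x
  proof -
    have "(z' has_vector_derivative z'' x) (at x within {-1<..<1})"
      by (rule has_vector_derivative_within_subset[of _ _ _ "{-1..1}"]) (use z2 that in \<open>auto simp: abs_less_iff\<close>)
    then show ?thesis using that by (subst (asm) has_vector_derivative_within_open) auto
  qed
  have dpsi: "(\<psi> has_vector_derivative p' x) (at x)" for x
  proof -
    consider "\<bar>x\<bar> < 1" | "x > 1" | "x < -1" | "x = 1" | "x = -1" by linarith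
    then show ?thesis
    proof cases
      case 1
      have "(\<psi> has_vector_derivative z' x) (at x)"
          by (rule has_vector_derivative_transform_within_open[OF zat[OF 1], of "{-1<..<1}"])
             (use 1 pz in \<open>auto simp: abs_less_iff\<close>)
        then show ?thesis using qz[of x] 1 by (simp add: abs_less_iff)
    next
      case 2
      have "(\<psi> has_vector_derivative d1 x) (at x)"
          by (rule has_vector_derivative_transform_within_open[OF de1, of "{1<..}"])
             (use 2 pe1 in auto)
        then show ?thesis using qd1[of x] 2 by simp
    next
      case 3
      have "(\<psi> has_vector_derivative d2 x) (at x)"
          by (rule has_vector_derivative_transform_within_open[OF de2, of "{..<-1}"])
             (use 3 pe2 in auto)
        then show ?thesis using qd2[of x] 3 by simp
    next
      case 4
      have a0: "(\<psi> has_vector_derivative z' x) (at x within {-1..1})"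
        by (rule has_vector_derivative_transform[where f=z]) (use 4 z1 pz in auto)
      have a: "(\<psi> has_vector_derivative p' x) (at x within {-1..1})"
        using a0 qz[of x] 4 by simp
      have b0: "(\<psi> has_vector_derivative d1 x) (at x within {1..})"
        by (rule has_vector_derivative_transform[where f=e1]) (use 4 de1 pe1 in auto)
      have b: "(\<psi> has_vector_derivative p' x) (at x within {1..})"
        using b0 qd1[of x] 4 by simp
      have "{-1..1} \<union> {1..} = {-1::real..}" by auto
      then have "(\<psi> has_vector_derivative p' x) (at x within {-1..})"
        using hvd_Un[OF a b] by simp
      then have "(\<psi> has_vector_derivative p' x) (at x within {-1<..})"
        by (rule has_vector_derivative_within_subset) auto
      then show ?thesis using 4 by (subst (asm) has_vector_derivative_within_open) auto
    next
      case 5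
      have a0: "(\<psi> has_vector_derivative z' x) (at x within {-1..1})"
        by (rule has_vector_derivative_transform[where f=z]) (use 5 z1 pz in auto)
      have a: "(\<psi> has_vector_derivative p' x) (at x within {-1..1})"
        using a0 qz[of x] 5 by simp
      have b0: "(\<psi> has_vector_derivative d2 x) (at x within {..-1})"
        by (rule has_vector_derivative_transform[where f=e2]) (use 5 de2 pe2 in auto)
      have b: "(\<psi> has_vector_derivative p' x) (at x within {..-1})"
        using b0 qd2[of x] 5 by simp
      have "{..-1} \<union> {-1..1} = {..1::real}" by auto
      then have "(\<psi> has_vector_derivative p' x) (at x within {..1})"
        using hvd_Un[OF b a] by simp
      then have "(\<psi> has_vector_derivative p' x) (at x within {..<1})"
        by (rule has_vector_derivative_within_subset) auto
      then show ?thesis using 5 by (subst (asm) has_vector_derivative_within_open) auto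
    qed
  qed
  have cp': "continuous_on UNIV p'"
  proof -
    have c1: "continuous_on {-1..1} p'"
    proof -
      have "continuous_on {-1..1} z'"
        unfolding continuous_on_eq_continuous_within
        using z2 has_vector_derivative_continuous by metis
      then show ?thesis by (rule continuous_on_eq) (simp add: qz)
    qed
    have c2: "continuous_on {1..} p'"
    proof -
      have "continuous_on {1..} d1" unfolding d1_def by (intro continuous_intros)
      then show ?thesis by (rule continuous_on_eq) (simp add: qd1)
    qed
    have c3: "continuous_on {..-1} p'"
    proof -
      have "continuous_on {..-1} d2" unfolding d2_def by (intro continuous_intros)
      then show ?thesis by (rule continuous_on_eq) (simp add: qd2)
    qed
    have "continuous_on ({..-1} \<union> {-1..1} \<union> {1..}) p'"
      by (intro continuous_on_closed_Un c1 c2 c3) auto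
    moreover have "{..-1} \<union> {-1..1} \<union> {1..} = (UNIV::real set)" by auto
    ultimately show ?thesis by simp
  qed
  have sol: "schroedinger_solution U k0 \<psi>"
    unfolding schroedinger_solution_def
  proof (intro exI[of _ p'] conjI allI impI dpsi cp')
    fix x :: real assume x: "\<bar>x\<bar> < 1"
    have "(p' has_vector_derivative z'' x) (at x)"
      by (rule has_vector_derivative_transform_within_open[OF z'at[OF x], of "{-1<..<1}"])
         (use x qz in \<open>auto simp: abs_less_iff\<close>)
    moreover have "z x \<noteq> 0" using znz x by (auto simp: abs_less_iff)
    ultimately show "\<exists>\<psi>''. (p' has_vector_derivative \<psi>'') (at x) \<and>
                 - \<psi>'' + U x * \<psi> x = complex_of_real (k0^2) * \<psi> x"
      using x pz[of x] by (intro exI[of _ "z'' x"]) (auto simp: U_def field_simps abs_less_iff)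
  qed
  have nz: "\<exists>x. \<psi> x \<noteq> 0" using znz pz[of 0] by (intro exI[of _ 0]) auto
  have asym1: "\<psi> x = (z 1 * exp (\<i> * of_real (- k0))) * exp (\<i> * of_real (k0 * \<bar>x\<bar>))" if "x \<ge> 1" for x
  proof -
    have "exp (\<i> * of_real (k0 * x + - k0)) = exp (\<i> * of_real (- k0)) * exp (\<i> * of_real (k0 * \<bar>x\<bar>))"
      by (rule exp_split) (use that in simp)
    then show ?thesis using pe1[OF that] unfolding e1_def by simp
  qed
  have asym2: "\<psi> x = (z (-1) * exp (\<i> * of_real (- k0))) * exp (\<i> * of_real (k0 * \<bar>x\<bar>))" if "x \<le> -1" for x
  proof -
    have "exp (\<i> * of_real (- k0 * x + - k0)) = exp (\<i> * of_real (- k0)) * exp (\<i> * of_real (k0 * \<bar>x\<bar>))"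
      by (rule exp_split) (use that in simp)
    then show ?thesis using pe2[OF that] unfolding e2_def by simp
  qed
  have tm: "M$2$2 = 0" if M: "is_transfer_matrix U k0 M" for M
  proof -
    define bm where "bm = z (-1) * exp (\<i> * of_real (- k0))"
    have l: "\<psi> x = 0 * exp (\<i> * of_real (k0 * x)) + bm * exp (- \<i> * of_real (k0 * x))" if "x \<le> -1" for x
    proof -
      have "exp (\<i> * of_real (k0 * \<bar>x\<bar>)) = exp (- \<i> * of_real (k0 * x))"
        using that by simp
      then show ?thesis using asym2[OF that] by (simp add: bm_def)
    qed
    have r: "\<psi> x = (z 1 * exp (\<i> * of_real (- k0))) * exp (\<i> * of_real (k0 * x)) + 0 * exp (- \<i> * of_real (k0 * x))" if "x \<ge> 1" for x
      using asym1[OF that] that by simp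
    have "0 = M$2$1 * 0 + M$2$2 * bm"
      using M[unfolded is_transfer_matrix_def, rule_format, OF conjI[OF sol conjI[OF allI[OF impI[OF l]] allI[OF impI[OF r]]]]]
      by simp
    moreover have "bm \<noteq> 0" using znz by (simp add: bm_def)
    ultimately show ?thesis by simp
  qed
  show ?thesis
    using sol nz asym1 asym2 tm by blast
qed

end
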